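(* For every ordinal $\beta\leq\omega_1$, in $\mathbb{S}(\beta)$ we have $\sigma(\llbracket\mathcal{L}\rrbracket)\subseteq\Lambda$, where $\Lambda=\{A\subseteq I\times\beta: A_0\in\mathcal{B}(I)\text{ and }A_\alpha\in\{\emptyset,I\}\text{ for all }0<\alpha<\beta\}$.
   Context: An LMP is $(S,\Sigma,\{\tau_a\}_{a\in L})$ with $L$ countable and Markov kernels $\tau_a$. The logic $\mathcal{L}$ has formulas $\phi::=\top\mid\phi\wedge\psi\mid\langle a\rangle_{>q}\phi$ ($a\in L$, $q\in\mathbb{Q}\cap[0,1]$) with $\llbracket\top\rrbracket=S$, $\llbracket\phi\wedge\psi\rrbracket=\llbracket\phi\rrbracket\cap\llbracket\psi\rrbracket$, $\llbracket\langle a\rangle_{>q}\phi\rrbracket=\{s:\tau_a(s,\llbracket\phi\rrbracket)>q\}$; $\sigma(\llbracket\mathcal{L}\rrbracket)$ is the $\sigma$-algebra generated by all $\llbracket\phi\rrbracket$. The processes $\mathbb{S}(\beta)$: $I=(0,1)$, $\mathfrak{m}$ Lebesgue measure, $V\subseteq I$ Lebesgue nonmeasurable, $\mathcal{B}_V=\sigma(\mathcal{B}(I)\cup\{V\})$, and $\mathfrak{m}_0,\mathfrak{m}_1$ measures on $\mathcal{B}_V$ extending $\mathfrak{m}$ with $\mathfrak{m}_0(V)\neq\mathfrak{m}_1(V)$. Let $\{q_n\}_{n\in\omega}$ enumerate $\mathbb{Q}\cap I$. For ordinals $\eta$: $\alpha_n(0)=0$, $\alpha_n(\zeta+1)=\zeta$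 for all $n$, and for limit $\lambda$, $(\alpha_n(\lambda))_{n\in\omega}$ is a fixed strictly increasing sequence of nonzero ordinals below $\lambda$ cofinal in $\lambda$. For an ordinal $\beta\leq\omega_1$, $\mathbb{S}(\beta)=(I\times\beta,\ \mathcal{B}_V\otimes\mathcal{P}(\beta),\ \{\tau_n\}_{n\in\omega})$ with $\tau_n((x,\eta),A)=x\cdot\mathfrak{m}_0(A_0)$ if $\eta=0$; $=\mathfrak{m}_0(A_{\alpha_n(\eta)})$ if $\eta>0$ and $x<q_n$; $=\mathfrak{m}_1(A_{\alpha_n(\eta)})$ if $\eta>0$ and $x\geq q_n$; here $A_\gamma=\{r:(r,\gamma)\in A\}$. These $\tau_n$ are Markov kernels, so $\mathbb{S}(\beta)$ is an LMP. *)

theory Defs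
  imports "HOL-Analysis.Analysis"
begin

text \<open>An ordinal beta is represented by a downward-closed subset B of a type of class
wellorder; its elements (with the induced order) are the ordinals below beta.
beta \<le> omega_1 iff every element of B has countably many predecessors.\<close>

definition ord0 :: "'b::wellorder" where
  "ord0 = (LEAST x. True)"

definition is_succ_of :: "'b::wellorder \<Rightarrow> 'b \<Rightarrow> bool" where
  "is_succ_of eta zeta \<longleftrightarrow> zeta < eta \<and> \<not> (\<exists>y. zeta < y \<and> y < eta)"

definition is_limit :: "'b::wellorder \<Rightarrow> bool" where
  "is_limit eta \<longleftrightarrow> eta \<noteq> ord0 \<and> \<not> (\<exists>zeta. is_succ_of eta zeta)"

definition ordinal_le_omega1 :: "'b::wellorder set \<Rightarrow> bool" where
  "ordinal_le_omega1 B \<longleftrightarrow>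
     (\<forall>x\<in>B. \<forall>y. y < x \<longrightarrow> y \<in> B) \<and> (\<forall>x\<in>B. countable {y. y < x})"

definition alpha_seq :: "'b::wellorder set \<Rightarrow> (nat \<Rightarrow> 'b \<Rightarrow> 'b) \<Rightarrow> bool" where
  "alpha_seq B alpha \<longleftrightarrow>
     (\<forall>n. alpha n ord0 = ord0) \<and>
     (\<forall>eta\<in>B. \<forall>zeta. is_succ_of eta zeta \<longrightarrow> (\<forall>n. alpha n eta = zeta)) \<and>
     (\<forall>lam\<in>B. is_limit lam \<longrightarrow>
        strict_mono (\<lambda>n. alpha n lam) \<and>
        (\<forall>n. alpha n lam \<noteq> ord0 \<and> alpha n lam < lam) \<and>
        (\<forall>g. g < lam \<longrightarrow> (\<exists>n. g < alpha n lam)))"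

definition unit_ival :: "real set" where
  "unit_ival = {0<..<1}"

definition borel_I :: "real set set" where
  "borel_I = sets (restrict_space borel unit_ival)"

definition slice :: "(real \<times> 'b) set \<Rightarrow> 'b \<Rightarrow> real set" where
  "slice A g = {r. (r, g) \<in> A}"

definition tauS :: "real measure \<Rightarrow> real measure \<Rightarrow> (nat \<Rightarrow> real) \<Rightarrow> (nat \<Rightarrow> 'b \<Rightarrow> 'b)
    \<Rightarrow> nat \<Rightarrow> real \<times> 'b::wellorder \<Rightarrow> (real \<times> 'b) set \<Rightarrow> real" where
  "tauS m0 m1 qe alpha n s A =
     (case s of (x, eta) \<Rightarrow>
        if eta = ord0 then x * measure m0 (slice A ord0)
        else if x < qe n then measure m0 (slice A (alpha n eta))
        else measure m1 (slice A (alpha n eta)))"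

datatype form = Top | Conj form form | Diam nat rat form

fun wf_form :: "form \<Rightarrow> bool" where
  "wf_form Top = True"
| "wf_form (Conj p q) = (wf_form p \<and> wf_form q)"
| "wf_form (Diam a r p) = (0 \<le> r \<and> r \<le> 1 \<and> wf_form p)"

fun sem :: "'s set \<Rightarrow> (nat \<Rightarrow> 's \<Rightarrow> 's set \<Rightarrow> real) \<Rightarrow> form \<Rightarrow> 's set" where
  "sem S tau Top = S"
| "sem S tau (Conj p q) = sem S tau p \<inter> sem S tau q"
| "sem S tau (Diam a r p) = {s \<in> S. tau a s (sem S tau p) > real_of_rat r}"

definition sigma_L :: "'s set \<Rightarrow> (nat \<Rightarrow> 's \<Rightarrow> 's set \<Rightarrow> real) \<Rightarrow> 's set set" where
  "sigma_L S tau = sigma_sets S {sem S tau p | p. wf_form p}"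

definition Lambda_set :: "'b::wellorder set \<Rightarrow> (real \<times> 'b) set set" where
  "Lambda_set B = {A. A \<subseteq> unit_ival \<times> B \<and> slice A ord0 \<in> borel_I \<and>
      (\<forall>a\<in>B. a \<noteq> ord0 \<longrightarrow> slice A a \<in> {{}, unit_ival})}"

end

theory Submission
  imports Defs
begin

lemma space_bI: "space (restrict_space borel unit_ival) = unit_ival"
  by (simp add: space_restrict_space)

lemma I_bI: "unit_ival \<in> borel_I"
  unfolding borel_I_def using sets.top[of "restrict_space borel unit_ival"] space_bI by simp

lemma empty_bI: "{} \<in> borel_I"
  unfolding borel_I_def by simp

lemma lam_slice:
  assumes "A \<in> Lambda_set B" shows "slice A g \<in> borel_I"
proof (cases "g \<in> B")
  case False
  with assms have "slice A g = {}" unfolding Lambda_set_def slice_def by auto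
  then show ?thesis using empty_bI by simp
next
  case True
  show ?thesis
  proof (cases "g = ord0")
    case True with assms show ?thesis unfolding Lambda_set_def by auto
  next
    case False
    with \<open>g \<in> B\<close> assms have "slice A g \<in> {{}, unit_ival}" unfolding Lambda_set_def by auto
    then show ?thesis using empty_bI I_bI by auto
  qed
qed

lemma compl_lam:
  assumes "A \<in> Lambda_set B" shows "unit_ival \<times> B - A \<in> Lambda_set B"
proof -
  have sl: "slice (unit_ival \<times> B - A) g = (if g \<in> B then unit_ival - slice A g else {})" for g
    unfolding slice_def by auto
  have "slice (unit_ival \<times> B - A) ord0 \<in> borel_I"
  proof (cases "ord0 \<in> B")
    case True
    have "slice A ord0 \<in> borel_I" using lam_slice[OF assms] .
    then have "unit_ival - slice A ord0 \<in> borel_I"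
      unfolding borel_I_def using sets.compl_sets[of "slice A ord0" "restrict_space borel unit_ival"]
      space_bI by simp
    then show ?thesis using sl True by simp
  qed (simp add: sl empty_bI)
  moreover have "\<forall>a\<in>B. a \<noteq> ord0 \<longrightarrow> slice (unit_ival \<times> B - A) a \<in> {{}, unit_ival}"
    using assms unfolding Lambda_set_def by (auto simp: sl)
  ultimately show ?thesis unfolding Lambda_set_def by auto
qed

lemma union_lam:
  fixes F :: "nat \<Rightarrow> (real \<times> 'b::wellorder) set"
  assumes "\<And>i. F i \<in> Lambda_set B" shows "(\<Union>i. F i) \<in> Lambda_set B"
proof -
  have sl: "slice (\<Union>i. F i) g = (\<Union>i. slice (F i) g)" for g
    unfolding slice_def by auto
  have "(\<Union>i. slice (F i) ord0) \<in> borel_I"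
    using lam_slice[OF assms] sets.countable_UN[where M="restrict_space borel unit_ival" and A="\<lambda>i. slice (F i) ord0" and X=UNIV]
    unfolding borel_I_def by auto
  moreover have "slice (\<Union>i. F i) a \<in> {{}, unit_ival}" if "a \<in> B" "a \<noteq> ord0" for a
  proof -
    have h: "\<And>i. slice (F i) a \<in> {{}, unit_ival}" using assms that unfolding Lambda_set_def by auto
    show ?thesis
    proof (cases "\<exists>i. slice (F i) a = unit_ival")
      case True
      then obtain i where "slice (F i) a = unit_ival" by auto
      then have "(\<Union>i. slice (F i) a) = unit_ival" using h by blast
      then show ?thesis by (simp add: sl)
    next
      case False
      then have "(\<Union>i. slice (F i) a) = {}" using h by blast
      then show ?thesis by (simp add: sl)
    qed
  qed
  moreover have "(\<Union>i. F i) \<subseteq> unit_ival \<times> B" using assms unfolding Lambda_set_def by auto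
  ultimately show ?thesis unfolding Lambda_set_def by (auto simp: sl)
qed

lemma sigma_lam:
  assumes "G \<subseteq> Lambda_set B" shows "sigma_sets (unit_ival \<times> B) G \<subseteq> Lambda_set B"
proof
  fix X assume "X \<in> sigma_sets (unit_ival \<times> B) G"
  then show "X \<in> Lambda_set B"
  proof induct
    case (Basic a) then show ?case using assms by auto
  next
    case Empty then show ?case unfolding Lambda_set_def slice_def using empty_bI by auto
  next
    case (Compl a) then show ?case using compl_lam by blast
  next
    case (Union a) then show ?case using union_lam by blast
  qed
qed

theorem lemma5p4:
  fixes B :: "'b::wellorder set"
    and V :: "real set"
    and m0 m1 :: "real measure"
    and qe :: "nat \<Rightarrow> real"
    and alpha :: "nat \<Rightarrow> 'b \<Rightarrow> 'b"
  assumes "ordinal_le_omega1 B"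
    and "V \<subseteq> unit_ival" and "V \<notin> sets lebesgue"
    and "space m0 = unit_ival" and "sets m0 = sigma_sets unit_ival (insert V borel_I)"
    and "space m1 = unit_ival" and "sets m1 = sigma_sets unit_ival (insert V borel_I)"
    and "\<forall>A\<in>borel_I. emeasure m0 A = emeasure lborel A"
    and "\<forall>A\<in>borel_I. emeasure m1 A = emeasure lborel A"
    and "emeasure m0 V \<noteq> emeasure m1 V"
    and "bij_betw qe UNIV (\<rat> \<inter> unit_ival)"
    and "alpha_seq B alpha"
  shows "sigma_L (unit_ival \<times> B) (tauS m0 m1 qe alpha) \<subseteq> Lambda_set B"
proof -
  have meq: "measure m0 X = measure m1 X" if "X \<in> borel_I" for X
    using assms(8,9) that unfolding measure_def by simp
  let ?S = "unit_ival \<times> B"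
  let ?t = "tauS m0 m1 qe alpha"
  have "sem ?S ?t p \<in> Lambda_set B" for p
  proof (induction p)
    case Top
    have "slice ?S ord0 \<in> borel_I"
      by (cases "ord0 \<in> B") (auto simp: slice_def I_bI empty_bI)
    then show ?case unfolding Lambda_set_def by (auto simp: slice_def)
  next
    case (Conj p q)
    have "slice (sem ?S ?t p \<inter> sem ?S ?t q) ord0 = slice (sem ?S ?t p) ord0 \<inter> slice (sem ?S ?t q) ord0"
      by (auto simp: slice_def)
    moreover have "slice (sem ?S ?t p) ord0 \<inter> slice (sem ?S ?t q) ord0 \<in> borel_I"
      using lam_slice[OF Conj.IH(1)] lam_slice[OF Conj.IH(2)] unfolding borel_I_def by auto
    moreover have "slice (sem ?S ?t p \<inter> sem ?S ?t q) a \<in> {{}, unit_ival}" if "a \<in> B" "a \<noteq> ord0" for a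
    proof -
      have "slice (sem ?S ?t p \<inter> sem ?S ?t q) a = slice (sem ?S ?t p) a \<inter> slice (sem ?S ?t q) a"
        by (auto simp: slice_def)
      moreover have "slice (sem ?S ?t p) a \<in> {{}, unit_ival}" "slice (sem ?S ?t q) a \<in> {{}, unit_ival}"
        using Conj.IH that unfolding Lambda_set_def by auto
      ultimately show ?thesis by auto
    qed
    ultimately show ?case using Conj.IH unfolding Lambda_set_def by auto
  next
    case (Diam a r p)
    let ?P = "sem ?S ?t p"
    define c where "c = measure m0 (slice ?P ord0)"
    have s0: "slice (sem ?S ?t (Diam a r p)) ord0 = (if ord0 \<in> B then unit_ival \<inter> {x. real_of_rat r < x * c} else {})"
      by (auto simp: slice_def tauS_def c_def)
    have "unit_ival \<inter> {x. real_of_rat r < x * c} \<in> borel_I"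
    proof -
      have "{x::real. real_of_rat r < x * c} \<in> sets borel" by measurable
      then show ?thesis unfolding borel_I_def by (auto simp: sets_restrict_space)
    qed
    then have A0: "slice (sem ?S ?t (Diam a r p)) ord0 \<in> borel_I" using s0 empty_bI by auto
    have A1: "slice (sem ?S ?t (Diam a r p)) e \<in> {{}, unit_ival}" if "e \<in> B" "e \<noteq> ord0" for e
    proof -
      define d where "d = measure m0 (slice ?P (alpha a e))"
      have "measure m1 (slice ?P (alpha a e)) = d"
        using meq[OF lam_slice[OF Diam.IH]] d_def by simp
      then have "slice (sem ?S ?t (Diam a r p)) e = (if real_of_rat r < d then unit_ival else {})"
        using that by (auto simp: slice_def tauS_def d_def)
      then show ?thesis by auto
    qed
    show ?case using A0 A1 unfolding Lambda_set_def by auto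
  qed
  then show ?thesis unfolding sigma_L_def by (intro sigma_lam) auto
qed

end
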